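(* Let $\mathcal{G}=(\mathcal{V},\mathcal{E})$ be a graph with node set $\mathcal{V}=\{1,\dots,n\}$, adjacency matrix $A=[a_{ij}]\in\{0,1\}^{n\times n}$ (with $a_{ij}=1$ iff $(i,j)\in\mathcal{E}$), and degree matrix $D=\mathrm{diag}(d_1,\dots,d_n)$, where $d_i=\sum_{j=1}^n a_{ij}$; assume $d_i>0$ for all $i$, so that $D^{-1}$ exists. Let $X\in\mathbb{R}^{n\times d}$ be a node feature matrix, $W_1\in\mathbb{R}^{d\times d'}$ and $W_2\in\mathbb{R}^{d'\times d'}$ (the propagation matrix). Consider the feature propagation process $$\widetilde{X} = X W_1 + D^{-1} A\, \widetilde{X}\, W_2,$$ equivalently, row-wise, $\widetilde{x_i}=W_1^T x_i + W_2^T \sum_{j\in \mathcal{N}(i)}\frac{1}{d_i}\widetilde{x_j}$ for $i=1,\dots,n$, where $\mathcal{N}(i)$ is the set of neighbors of node $i$, $x_i^T$ is the $i$-th row of $X$ and $\widetilde{x_i}^T$ is the $i$-th row of $\widetilde{X}$. Suppose that (1) $W_2$ is entrywise nonnegative, and (2) $\max\{W_2^T\mathbf{e}\}<1$, where $\mathbf{e}$ is the all-ones vector and the maximum is over the entries of the vector $W_2^T\mathbf{e}$ (i.e., every column sum of $W_2$ is strictly less than $1$). Then the propagation process is convergent: the iteration $\widetilde{X}^{(t+1)} = X W_1 + D^{-1}A\widetilde{X}^{(t)}W_2$ converges for every initial $\widetilde{X}^{(0)}\in\mathbb{R}^{n\times d'}$, and its limit is the unique solution $\widetilde{X}\in\mathbb{R}^{n\times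 d'}$ of the equation $\widetilde{X} = X W_1 + D^{-1} A \widetilde{X} W_2$.
   Context: All matrices are real. $\mathbf{e}$ denotes the all-ones column vector of the appropriate dimension. For a vector $v$, $\max\{v\}$ denotes its largest entry. *)

theory Defs
  imports "HOL-Analysis.Analysis"
begin

definition degree_matrix :: "real^'n^'n \<Rightarrow> real^'n^'n" where
  "degree_matrix A = (\<chi> i j. if i = j then (\<Sum>k\<in>UNIV. A $ i $ k) else 0)"

definition ones_vec :: "real^'n" where
  "ones_vec = (\<chi> i. 1)"

definition prop_map ::
  "real^'n^'n \<Rightarrow> real^'d^'n \<Rightarrow> real^'e^'d \<Rightarrow> real^'e^'e \<Rightarrow> real^'e^'n \<Rightarrow> real^'e^'n" where
  "prop_map A X W1 W2 Z = X ** W1 + ((matrix_inv (degree_matrix A) ** A) ** Z) ** W2"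

end

theory Submission
  imports Defs
begin

lemma contr_entry:
  fixes P :: "real^'n^'n" and Z :: "real^'e^'n" and W :: "real^'e^'e"
  assumes Pn: "\<forall>i j. P $ i $ j \<ge> 0" and Pr: "\<forall>i. (\<Sum>j\<in>UNIV. P $ i $ j) \<le> 1"
    and Wn: "\<forall>i j. W $ i $ j \<ge> 0" and Wc: "\<forall>k. (\<Sum>l\<in>UNIV. W $ l $ k) \<le> c"
    and ZB: "\<forall>j l. \<bar>Z $ j $ l\<bar> \<le> B"
  shows "\<bar>((P ** Z) ** W) $ i $ k\<bar> \<le> c * B"
proof -
  have B0: "B \<ge> 0" using ZB by (meson abs_ge_zero order_trans)
  have inner: "\<bar>(\<Sum>j\<in>UNIV. P $ i $ j * Z $ j $ l)\<bar> \<le> B" for l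
  proof -
    have "\<bar>(\<Sum>j\<in>UNIV. P $ i $ j * Z $ j $ l)\<bar> \<le> (\<Sum>j\<in>UNIV. \<bar>P $ i $ j * Z $ j $ l\<bar>)"
      by (rule sum_abs)
    also have "\<dots> \<le> (\<Sum>j\<in>UNIV. P $ i $ j * B)"
      by (rule sum_mono) (simp add: abs_mult Pn ZB mult_left_mono)
    also have "\<dots> = (\<Sum>j\<in>UNIV. P $ i $ j) * B" by (simp add: sum_distrib_right)
    also have "\<dots> \<le> B" using Pr B0 by (intro mult_left_le_one_le) (auto intro: sum_nonneg simp: Pn)
    finally show ?thesis .
  qed
  have "\<bar>((P ** Z) ** W) $ i $ k\<bar> = \<bar>\<Sum>l\<in>UNIV. (\<Sum>j\<in>UNIV. P $ i $ j * Z $ j $ l) * W $ l $ k\<bar>"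
    by (simp add: matrix_matrix_mult_def)
  also have "\<dots> \<le> (\<Sum>l\<in>UNIV. \<bar>(\<Sum>j\<in>UNIV. P $ i $ j * Z $ j $ l) * W $ l $ k\<bar>)"
    by (rule sum_abs)
  also have "\<dots> \<le> (\<Sum>l\<in>UNIV. B * W $ l $ k)"
    by (rule sum_mono) (simp add: abs_mult Wn inner mult_right_mono)
  also have "\<dots> = B * (\<Sum>l\<in>UNIV. W $ l $ k)" by (simp add: sum_distrib_left)
  also have "\<dots> \<le> B * c" using Wc B0 by (simp add: mult_left_mono)
  finally show ?thesis by (simp add: mult.commute)
qed

lemma iter_bound:
  fixes P :: "real^'n^'n" and W :: "real^'e^'e" and U :: "nat \<Rightarrow> real^'e^'n"
  assumes Pn: "\<forall>i j. P $ i $ j \<ge> 0" and Pr: "\<forall>i. (\<Sum>j\<in>UNIV. P $ i $ j) \<le> 1"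
    and Wn: "\<forall>i j. W $ i $ j \<ge> 0" and Wc: "\<forall>k. (\<Sum>l\<in>UNIV. W $ l $ k) \<le> c"
    and c0: "c \<ge> 0"
    and U: "\<forall>t. U (Suc t) = (P ** U t) ** W"
  shows "\<bar>U t $ i $ k\<bar> \<le> c ^ t * norm (U 0)"
proof (induction t arbitrary: i k)
  case 0
  have "\<bar>U 0 $ i $ k\<bar> \<le> norm (U 0 $ i)" by (rule component_le_norm_cart)
  also have "\<dots> \<le> norm (U 0)" by (rule Finite_Cartesian_Product.norm_nth_le)
  finally show ?case by simp
next
  case (Suc t)
  have "\<bar>((P ** U t) ** W) $ i $ k\<bar> \<le> c * (c ^ t * norm (U 0))"
    by (rule contr_entry[OF Pn Pr Wn Wc]) (use Suc in blast)
  then show ?case using U by simp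
qed

lemma iter_tendsto:
  fixes P :: "real^'n^'n" and W :: "real^'e^'e" and U :: "nat \<Rightarrow> real^'e^'n"
  assumes Pn: "\<forall>i j. P $ i $ j \<ge> 0" and Pr: "\<forall>i. (\<Sum>j\<in>UNIV. P $ i $ j) \<le> 1"
    and Wn: "\<forall>i j. W $ i $ j \<ge> 0" and Wc: "\<forall>k. (\<Sum>l\<in>UNIV. W $ l $ k) \<le> c"
    and c0: "c \<ge> 0" and c1: "c < 1"
    and U: "\<forall>t. U (Suc t) = (P ** U t) ** W"
  shows "U \<longlonglongrightarrow> 0"
proof -
  let ?N = "real (CARD('n)) * real (CARD('e))"
  have b: "norm (U t) \<le> ?N * (c ^ t * norm (U 0))" for t
  proof -
    have "norm (U t) \<le> (\<Sum>i\<in>UNIV. norm (U t $ i))" by (simp add: norm_vec_def L2_set_le_sum)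
    also have "\<dots> \<le> (\<Sum>i\<in>UNIV. (\<Sum>k\<in>UNIV. \<bar>U t $ i $ k\<bar>))"
      by (rule sum_mono) (simp add: norm_le_l1_cart)
    also have "\<dots> \<le> (\<Sum>i\<in>(UNIV::'n set). (\<Sum>k\<in>(UNIV::'e set). c ^ t * norm (U 0)))"
      by (intro sum_mono iter_bound[OF Pn Pr Wn Wc c0 U])
    also have "\<dots> = ?N * (c ^ t * norm (U 0))" by simp
    finally show ?thesis .
  qed
  have "(\<lambda>t. ?N * (c ^ t * norm (U 0))) \<longlonglongrightarrow> ?N * (0 * norm (U 0))"
    by (intro tendsto_mult tendsto_const LIMSEQ_power_zero) (use c0 c1 in auto)
  then have "(\<lambda>t. ?N * (c ^ t * norm (U 0))) \<longlonglongrightarrow> 0" by simp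
  then show ?thesis
    by (rule Lim_null_comparison[rotated]) (simp add: b)
qed

lemma matrix_add_rdistrib': "((B::real^'m^'n) + C) ** (A::real^'k^'m) = B ** A + C ** A"
  by (vector matrix_matrix_mult_def sum.distrib[symmetric] field_simps)
lemma diag_mult:
  fixes a b :: "'n::finite \<Rightarrow> real"
  shows "((\<chi> i j. if i = j then a i else 0) ** (\<chi> i j. if i = j then b i else 0) :: real^'n^'n)
     = (\<chi> i j. if i = j then a i * b i else 0)"
proof -
  have "(\<Sum>k\<in>UNIV. (if i = k then a i else 0) * (if k = j then b k else 0)) = (if i = j then a i * b i else 0)" for i j :: 'n
  proof -
    have "(\<Sum>k\<in>UNIV. (if i = k then a i else 0) * (if k = j then b k else 0)) = (\<Sum>k\<in>UNIV. if k = i then a i * (if i = j then b i else 0) else 0)"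
      by (rule sum.cong) auto
    also have "\<dots> = (if i = j then a i * b i else 0)" by simp
    finally show ?thesis .
  qed
  then show ?thesis by (simp add: matrix_matrix_mult_def vec_eq_iff)
qed
lemma diag_mult2:
  fixes a :: "'n::finite \<Rightarrow> real" and A :: "real^'m^'n"
  shows "((\<chi> i j. if i = j then a i else 0) ** A) $ i $ j = a i * A $ i $ j"
proof -
  have "(\<Sum>k\<in>UNIV. (if i = k then a i else 0) * A $ k $ j) = (\<Sum>k\<in>UNIV. if k = i then a i * A $ i $ j else 0)"
    by (rule sum.cong) auto
  then show ?thesis by (simp add: matrix_matrix_mult_def)
qed

lemma matrix_sub_ldistrib': "(A::real^'m^'n) ** (B - C) = A ** B - A ** C"
  by (metis (no_types) add_diff_cancel diff_add_cancel matrix_add_ldistrib)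

lemma matrix_sub_rdistrib': "((B::real^'m^'n) - C) ** (A::real^'k^'m) = B ** A - C ** A"
  by (metis (no_types) add_diff_cancel diff_add_cancel matrix_add_rdistrib')

theorem theorem1:
  fixes A :: "real^'n^'n" and X :: "real^'d^'n"
    and W1 :: "real^'e^'d" and W2 :: "real^'e^'e"
  assumes adj01: "\<forall>i j. A $ i $ j \<in> {0, 1}"
    and deg_pos: "\<forall>i. (\<Sum>j\<in>UNIV. A $ i $ j) > 0"
    and W2_nonneg: "\<forall>i j. W2 $ i $ j \<ge> 0"
    and W2_colsum: "\<forall>j. (transpose W2 *v ones_vec) $ j < 1"
  shows "\<exists>Y. (\<forall>Z. Z = prop_map A X W1 W2 Z \<longleftrightarrow> Z = Y) \<and>
             (\<forall>Xt :: nat \<Rightarrow> real^'e^'n.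
                (\<forall>t. Xt (Suc t) = prop_map A X W1 W2 (Xt t)) \<longrightarrow> Xt \<longlonglongrightarrow> Y)"
proof -
  define d where "d i = (\<Sum>j\<in>UNIV. A $ i $ j)" for i
  define D where "D = degree_matrix A"
  define Di :: "real^'n^'n" where "Di = (\<chi> i j. if i = j then 1 / d i else 0)"
  have dpos: "d i > 0" for i using deg_pos d_def by simp
  have dnz: "d i \<noteq> 0" for i using dpos[of i] by simp
  have Dd: "D = (\<chi> i j. if i = j then d i else 0)"
    unfolding D_def degree_matrix_def d_def by simp
  have D1: "D ** Di = mat 1"
    unfolding Dd Di_def diag_mult mat_def using dnz by (simp add: vec_eq_iff)
  have D2: "Di ** D = mat 1"
    unfolding Dd Di_def diag_mult mat_def using dnz by (simp add: vec_eq_iff)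
  have invD: "matrix_inv D = Di"
  proof -
    have ex: "\<exists>A'::real^'n^'n. D ** A' = mat 1 \<and> A' ** D = mat 1" using D1 D2 by blast
    obtain A' where A': "D ** A' = mat 1" "A' ** D = mat 1" and mi: "matrix_inv D = A'"
      using someI_ex[OF ex] unfolding matrix_inv_def by blast
    have "A' = A' ** (D ** Di)" by (simp add: D1)
    also have "\<dots> = (A' ** D) ** Di" by (simp add: matrix_mul_assoc)
    also have "\<dots> = Di" by (simp add: A')
    finally show ?thesis using mi by simp
  qed
  define P where "P = Di ** A"
  have Pe: "P $ i $ j = A $ i $ j / d i" for i j
    by (simp add: P_def Di_def diag_mult2)
  have A0: "A $ i $ j \<ge> 0" for i j using adj01 by (metis empty_iff insert_iff order_refl zero_le_one)
  have Pn: "\<forall>i j. P $ i $ j \<ge> 0" using Pe A0 dpos by (simp add: less_imp_le)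
  have Pr: "\<forall>i. (\<Sum>j\<in>UNIV. P $ i $ j) \<le> 1"
  proof
    fix i
    have "(\<Sum>j\<in>UNIV. P $ i $ j) = (\<Sum>j\<in>UNIV. A $ i $ j) / d i"
      by (simp add: Pe sum_divide_distrib)
    also have "\<dots> = 1" using dpos[of i] by (simp add: d_def[symmetric])
    finally show "(\<Sum>j\<in>UNIV. P $ i $ j) \<le> 1" by simp
  qed
  define cs where "cs k = (\<Sum>l\<in>UNIV. W2 $ l $ k)" for k
  define c where "c = Max (range cs)"
  have csl: "cs k < 1" for k
    using W2_colsum by (simp add: cs_def matrix_vector_mult_def transpose_def ones_vec_def)
  have Wc: "\<forall>k. (\<Sum>l\<in>UNIV. W2 $ l $ k) \<le> c"
    unfolding c_def cs_def[symmetric] by (auto intro: Max_ge)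
  have c1: "c < 1" unfolding c_def using Max_in[of "range cs"] csl by auto
  have c0: "c \<ge> 0" using Wc W2_nonneg by (meson order_trans sum_nonneg)
  define L where "L Z = (P ** Z) ** W2" for Z :: "real^'e^'n"
  have pm: "prop_map A X W1 W2 Z = X ** W1 + L Z" for Z
    by (simp add: prop_map_def L_def P_def invD[unfolded D_def])
  have Ldiff: "L Z1 - L Z2 = L (Z1 - Z2)" for Z1 Z2
    by (simp add: L_def matrix_sub_ldistrib' matrix_sub_rdistrib')
  have conv: "U \<longlonglongrightarrow> 0" if "\<forall>t. U (Suc t) = L (U t)" for U
    using iter_tendsto[OF Pn Pr W2_nonneg Wc c0 c1] that by (simp add: L_def)
  have fix0: "Z = 0" if "Z = L Z" for Z
  proof -
    have "(\<lambda>t. Z) \<longlonglongrightarrow> 0" using conv[of "\<lambda>t. Z"] that by simp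
    then show ?thesis using LIMSEQ_const_iff by blast
  qed
  define M where "M Z = Z - L Z" for Z
  have linM: "linear M"
  proof (rule linearI)
    fix b1 b2 show "M (b1 + b2) = M b1 + M b2"
      by (simp add: M_def L_def matrix_add_ldistrib matrix_add_rdistrib')
  next
    fix r b show "M (r *\<^sub>R b) = r *\<^sub>R M b"
      by (simp add: M_def L_def matrix_scalar_ac scalar_matrix_assoc[symmetric] scaleR_diff_right)
  qed
  have injM: "inj M"
  proof (rule injI)
    fix x y assume "M x = M y"
    then have "x - y = L (x - y)" by (simp add: M_def Ldiff[symmetric] algebra_simps)
    then show "x = y" using fix0[of "x - y"] by simp
  qed
  have "surj M" using linear_injective_imp_surjective[OF linM injM] by simp
  then obtain Y where Y: "M Y = X ** W1" by (metis surjD)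
  have Yfix: "Y = prop_map A X W1 W2 Y" using Y by (simp add: pm M_def algebra_simps)
  show ?thesis
  proof (intro exI conjI allI impI)
    fix Z
    show "Z = prop_map A X W1 W2 Z \<longleftrightarrow> Z = Y"
    proof
      assume "Z = prop_map A X W1 W2 Z"
      then have "Z - Y = L (Z - Y)" using Yfix pm Ldiff[symmetric] by (metis add_diff_cancel_left)
      then show "Z = Y" using fix0[of "Z - Y"] by simp
    next
      assume "Z = Y" then show "Z = prop_map A X W1 W2 Z" using Yfix by simp
    qed
  next
    fix Xt :: "nat \<Rightarrow> real^'e^'n"
    assume h: "\<forall>t. Xt (Suc t) = prop_map A X W1 W2 (Xt t)"
    have "\<forall>t. (Xt (Suc t) - Y) = L (Xt t - Y)"
      using h Yfix pm Ldiff[symmetric] by (metis add_diff_cancel_left)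
    then have "(\<lambda>t. Xt t - Y) \<longlonglongrightarrow> 0" using conv[of "\<lambda>t. Xt t - Y"] by simp
    then show "Xt \<longlonglongrightarrow> Y" by (simp add: LIM_zero_iff)
  qed
qed

end
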